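(* Let $d\ge2$, $R>0$, and let $A\subset\mathbb{R}^d$ be a body with $\mathrm{reach}(A)\ge R$. Then $A$ is an $R$-body and, for every $a\in\partial A$, the set $\mathcal{N}_R(A,a)$ is spherically convex.
   Context: A body is a nonempty closed subset of $\mathbb{R}^d$; $S^{d-1}$ the unit sphere; $B(x)=\{y:|y-x|<R\}$; $co(\cdot)$ convex hull. A body $A$ is an $R$-body if every $y\notin A$ lies in some open ball of radius $R$ disjoint from $A$. For $a\in\partial A$, $\mathcal{N}_R(A,a)=\{v\in S^{d-1}: A\cap B(a+Rv)=\emptyset\}$. A set $\mathcal K\subset S^{d-1}$ is spherically convex if $co(K)\cap S^{d-1}=\mathcal K$, where $K=\{\lambda v:\lambda\ge0,v\in\mathcal K\}$. $\mathrm{Unp}(A)$ is the set of points with a unique nearest point in $A$; $\mathrm{reach}(A,a)=\sup\{\rho>0:\{x:|x-a|<\rho\}\subset\mathrm{Unp}(A)\}$, $\mathrm{reach}(A)=\inf_{a\in A}\mathrm{reach}(A,a)$. *)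

theory Defs
  imports "HOL-Analysis.Analysis"
begin

definition is_body :: "'a::euclidean_space set \<Rightarrow> bool" where
  "is_body A \<longleftrightarrow> A \<noteq> {} \<and> closed A"

definition R_body :: "real \<Rightarrow> 'a::euclidean_space set \<Rightarrow> bool" where
  "R_body R A \<longleftrightarrow> is_body A \<and>
     (\<forall>y. y \<notin> A \<longrightarrow> (\<exists>c. y \<in> ball c R \<and> A \<inter> ball c R = {}))"

definition normals_R :: "real \<Rightarrow> 'a::euclidean_space set \<Rightarrow> 'a \<Rightarrow> 'a set" where
  "normals_R R A a = {v \<in> sphere 0 1. A \<inter> ball (a + R *\<^sub>R v) R = {}}"

definition sph_convex :: "'a::euclidean_space set \<Rightarrow> bool" where
  "sph_convex S \<longleftrightarrow> S \<subseteq> sphere 0 1 \<and>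
     convex hull {t *\<^sub>R v | t v. t \<ge> 0 \<and> v \<in> S} \<inter> sphere 0 1 = S"

definition Unp :: "'a::euclidean_space set \<Rightarrow> 'a set" where
  "Unp A = {x. \<exists>!a. a \<in> A \<and> (\<forall>b\<in>A. dist x a \<le> dist x b)}"

text \<open>Local reach (in the extended reals; the supremum of the empty set is -\<infinity>).\<close>
definition reach_at :: "'a::euclidean_space set \<Rightarrow> 'a \<Rightarrow> ereal" where
  "reach_at A a = Sup {ereal \<rho> | \<rho>. \<rho> > 0 \<and> ball a \<rho> \<subseteq> Unp A}"

definition reach :: "'a::euclidean_space set \<Rightarrow> ereal" where
  "reach A = (INF a\<in>A. reach_at A a)"

end

theory Submission
  imports Defs
begin

definition nearest :: "'a::euclidean_space set \<Rightarrow> 'a \<Rightarrow> 'a" where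
  "nearest A x = (SOME p. p \<in> A \<and> (\<forall>b\<in>A. dist x p \<le> dist x b))"

lemma nearest_ex:
  fixes A :: "'a::euclidean_space set"
  assumes "closed A" "A \<noteq> {}"
  shows "nearest A x \<in> A \<and> (\<forall>b\<in>A. dist x (nearest A x) \<le> dist x b)"
proof -
  obtain p where "p \<in> A" "\<And>y. y \<in> A \<Longrightarrow> dist x p \<le> dist x y"
    using distance_attains_inf[OF assms] by blast
  hence "\<exists>p. p \<in> A \<and> (\<forall>b\<in>A. dist x p \<le> dist x b)" by blast
  thus ?thesis unfolding nearest_def by (rule someI_ex)
qed

lemma Unp_unique:
  assumes "x \<in> Unp A" "p \<in> A" "\<forall>b\<in>A. dist x p \<le> dist x b"
    "q \<in> A" "\<forall>b\<in>A. dist x q \<le> dist x b"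
  shows "p = q"
  using assms unfolding Unp_def by blast

lemma nearest_cont:
  fixes A :: "'a::euclidean_space set"
  assumes "closed A" "A \<noteq> {}" "w \<in> Unp A"
  shows "isCont (nearest A) w"
proof (rule continuous_at_eps_delta[THEN iffD2], intro allI impI)
  fix e :: real assume e: "e > 0"
  define p where "p = nearest A w"
  have p: "p \<in> A" "\<forall>b\<in>A. dist w p \<le> dist w b" using nearest_ex[OF assms(1,2)] p_def by auto
  define d where "d = dist w p"
  define K where "K = A \<inter> cball w (d+1) - ball p e"
  have Kc: "closed K" unfolding K_def using assms(1) by (intro closed_Diff closed_Int) auto
  obtain m where m: "m > d" "m \<le> d + 1" "\<forall>c\<in>K. m \<le> dist w c"
  proof (cases "K = {}")
    case True thus ?thesis using that[of "d+1"] by auto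
  next
    case False
    obtain c0 where c0: "c0 \<in> K" "\<And>y. y \<in> K \<Longrightarrow> dist w c0 \<le> dist w y"
      using distance_attains_inf[OF Kc False] by blast
    have "dist w c0 > d"
    proof (rule ccontr)
      assume "\<not> dist w c0 > d"
      hence "\<forall>b\<in>A. dist w c0 \<le> dist w b" using p d_def by fastforce
      hence "c0 = p" using Unp_unique[OF assms(3), of c0 p] c0 p K_def by auto
      thus False using c0 e K_def by auto
    qed
    moreover have "dist w c0 \<le> d + 1" using c0 K_def by auto
    ultimately show ?thesis using that[of "dist w c0"] c0 by auto
  qed
  define \<eta> where "\<eta> = min ((m-d)/2) (1/2)"
  have eta: "\<eta> > 0" using m \<eta>_def by auto
  show "\<exists>d>0. \<forall>x. dist x w < d \<longrightarrow> dist (nearest A x) (nearest A w) < e"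
  proof (intro exI[of _ \<eta>] conjI allI impI eta)
    fix x assume x: "dist x w < \<eta>"
    define q where "q = nearest A x"
    have q: "q \<in> A" "\<forall>b\<in>A. dist x q \<le> dist x b" using nearest_ex[OF assms(1,2)] q_def by auto
    have "dist x q \<le> dist x p" using q p by auto
    also have "\<dots> \<le> dist x w + d" using d_def dist_triangle by auto
    finally have "dist w q < d + 2*\<eta>" using x dist_triangle[of w q x] by (auto simp: dist_commute)
    moreover have "2*\<eta> \<le> m - d" "2*\<eta> \<le> 1" unfolding \<eta>_def by (simp_all add: min_def)
    ultimately have wq: "dist w q < m" "dist w q \<le> d + 1" using m by linarith+
    have "q \<in> ball p e"
    proof (rule ccontr)
      assume "q \<notin> ball p e"
      hence "q \<in> K" using K_def q wq by auto
      thus False using m wq by auto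
    qed
    thus "dist (nearest A x) (nearest A w) < e" using q_def p_def by (simp add: dist_commute)
  qed
qed

lemma Unp_reach:
  fixes A :: "'a::euclidean_space set"
  assumes "reach A \<ge> ereal R" "a \<in> A" "dist a w < R"
  shows "w \<in> Unp A"
proof -
  have "reach A \<le> reach_at A a" unfolding reach_def using assms(2) by (rule INF_lower)
  hence "ereal (dist a w) < reach_at A a" using assms by (meson ereal_less_eq(3) le_less_trans linorder_not_le order_trans)
  then obtain x where "x \<in> {ereal \<rho> | \<rho>. \<rho> > 0 \<and> ball a \<rho> \<subseteq> Unp A}" "ereal (dist a w) < x"
    unfolding reach_at_def using less_Sup_iff by blast
  then obtain \<rho> where "ball a \<rho> \<subseteq> Unp A" "dist a w < \<rho>" by auto
  thus ?thesis by auto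
qed

lemma nest:
  fixes a u :: "'a::euclidean_space"
  assumes "norm u = 1" "t' \<le> t"
  shows "ball (a + t' *\<^sub>R u) t' \<subseteq> ball (a + t *\<^sub>R u) t"
proof
  fix x assume "x \<in> ball (a + t' *\<^sub>R u) t'"
  hence "dist (a + t' *\<^sub>R u) x < t'" by auto
  moreover have "dist (a + t *\<^sub>R u) (a + t' *\<^sub>R u) = t - t'"
    using assms by (simp add: dist_norm algebra_simps flip: scaleR_diff_left)
  ultimately show "x \<in> ball (a + t *\<^sub>R u) t" using dist_triangle[of "a + t *\<^sub>R u" x "a + t' *\<^sub>R u"] by auto
qed

lemma union_ball:
  fixes a u :: "'a::euclidean_space"
  assumes "norm u = 1" "R > 0" "\<forall>t. 0 \<le> t \<and> t < R \<longrightarrow> A \<inter> ball (a + t *\<^sub>R u) t = {}"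
  shows "A \<inter> ball (a + R *\<^sub>R u) R = {}"
proof (rule ccontr)
  assume "A \<inter> ball (a + R *\<^sub>R u) R \<noteq> {}"
  then obtain x where x: "x \<in> A" "dist (a + R *\<^sub>R u) x < R" by auto
  define d where "d = dist (a + R *\<^sub>R u) x"
  define t where "t = (2*R + d)/3"
  have "d \<ge> 0" using d_def by auto
  have t1: "0 \<le> t" unfolding t_def using \<open>d \<ge> 0\<close> assms(2) by simp
  have t2: "t < R" unfolding t_def using x(2) d_def by simp
  note t = t1 t2
  have "dist (a + t *\<^sub>R u) (a + R *\<^sub>R u) = R - t"
    using assms t by (simp add: dist_norm algebra_simps flip: scaleR_diff_left)
  hence "dist (a + t *\<^sub>R u) x \<le> (R - t) + d" using dist_triangle[of "a + t *\<^sub>R u" x "a + R *\<^sub>R u"] d_def by linarith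
  moreover have "(R - t) + d < t" unfolding t_def using x(2) d_def by (simp add: field_simps)
  ultimately have "dist (a + t *\<^sub>R u) x < t" by linarith
  thus False using assms(3) t x(1) by (metis IntI empty_iff mem_ball)
qed

lemma step:
  fixes A :: "'a::euclidean_space set" and a u :: 'a
  assumes cl: "closed A" "A \<noteq> {}" and unp: "\<And>c w. c \<in> A \<Longrightarrow> dist c w < R \<Longrightarrow> w \<in> Unp A"
    and a: "a \<in> A" and u: "norm u = 1" and T: "0 < T" "T < R"
    and disj: "A \<inter> ball (a + T *\<^sub>R u) T = {}"
  obtains h where "h > 0" "A \<inter> ball (a + (T+h) *\<^sub>R u) (T+h) = {}"
proof -
  define z where "z = a + T *\<^sub>R u"
  have zfar: "\<And>c. c \<in> A \<Longrightarrow> T \<le> dist z c" using disj z_def by (auto simp: not_less)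
  have za: "dist z a = T" using u T by (simp add: z_def dist_norm)
  define h where "h = min (T/3) ((R-T)/3)"
  have h: "h > 0" "3*h \<le> T" "3*h \<le> R - T" using T unfolding h_def by (auto simp: min_def)
  define V where "V = cball z h"
  have wU: "w \<in> Unp A" if "w \<in> V" for w
  proof -
    have "dist a w \<le> dist a z + dist z w" by (rule dist_triangle)
    also have "\<dots> \<le> T + h" using that za V_def by (auto simp: dist_commute)
    finally show ?thesis using unp[OF a] h by auto
  qed
  have wfar: "T - h \<le> dist w c" if "w \<in> V" "c \<in> A" for w c
  proof -
    have "dist z c \<le> dist z w + dist w c" by (rule dist_triangle)
    thus ?thesis using zfar[OF that(2)] that(1) V_def by auto
  qed
  have nr: "nearest A w \<in> A \<and> (\<forall>b\<in>A. dist w (nearest A w) \<le> dist w b)" for w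
    using nearest_ex[OF cl] by blast
  have npos: "norm (w - nearest A w) > 0" if "w \<in> V" for w
  proof -
    have "T - h \<le> dist w (nearest A w)" using wfar[OF that] nr by blast
    hence "T - h \<le> norm (w - nearest A w)" by (simp add: dist_norm)
    moreover have "T - h > 0" using h by auto
    ultimately show ?thesis by linarith
  qed
  define f where "f = (\<lambda>w. z + h *\<^sub>R (inverse (norm (w - nearest A w)) *\<^sub>R (w - nearest A w)))"
  have contxi: "continuous_on V (nearest A)"
    by (rule continuous_at_imp_continuous_on) (use nearest_cont[OF cl] wU in blast)
  have contf: "continuous_on (cball z h) f" unfolding f_def V_def[symmetric]
    by (intro continuous_intros contxi) (use npos in force)
  have mapf: "f \<in> cball z h \<rightarrow> cball z h"
  proof
    fix w assume "w \<in> cball z h"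
    hence "norm (w - nearest A w) > 0" using npos V_def by auto
    hence "dist z (f w) = h" using h unfolding f_def by (simp add: dist_norm)
    thus "f w \<in> cball z h" by simp
  qed
  obtain w where w: "w \<in> V" "f w = w" using brouwer_ball[OF h(1) contf mapf] V_def by blast
  define b where "b = nearest A w"
  define D where "D = norm (w - b)"
  have b: "b \<in> A" "\<forall>c\<in>A. D \<le> dist w c" using nr[of w] unfolding b_def D_def by (auto simp: dist_norm)
  have D: "T - h \<le> D" using wfar[OF w(1) b(1)] by (simp add: D_def dist_norm)
  hence Dh: "D > h" "D > 0" using h by auto
  have e1: "w = z + (h/D) *\<^sub>R (w - b)" using w(2) unfolding f_def b_def[symmetric] D_def[symmetric]
    by (simp add: divide_inverse)
  have zeq: "z = w - (h/D) *\<^sub>R (w - b)" using e1 by (metis add_diff_cancel_right')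
  have zb: "z - b = (1 - h/D) *\<^sub>R (w - b)" using zeq by (simp add: algebra_simps)
  have "dist z b = (1 - h/D) * D" using zb Dh by (simp add: dist_norm D_def)
  moreover have "(1 - h/D) * D = D - h" using Dh by (simp add: field_simps)
  ultimately have dzb: "dist z b = D - h" by simp
  have dwz: "dist w z = h" using zeq Dh h by (simp add: dist_norm D_def)
  have znear: "\<forall>c\<in>A. dist z b \<le> dist z c"
  proof
    fix c assume "c \<in> A"
    hence "D \<le> dist w c" using b by auto
    also have "\<dots> \<le> dist w z + dist z c" by (rule dist_triangle)
    finally show "dist z b \<le> dist z c" using dzb dwz by auto
  qed
  have anear: "\<forall>c\<in>A. dist z a \<le> dist z c" using za zfar by auto
  have "z \<in> Unp A" using unp[OF a] za T by (simp add: dist_commute)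
  hence ba: "b = a" using Unp_unique b(1) a znear anear by blast
  have DT: "D = T + h" using dzb za ba by auto
  have "T *\<^sub>R u = (T/D) *\<^sub>R (w - a)"
  proof -
    have "T *\<^sub>R u = z - a" by (simp add: z_def)
    also have "\<dots> = (1 - h/D) *\<^sub>R (w - a)" using zb ba by simp
    also have "1 - h/D = T/D" using DT Dh by (simp add: field_simps)
    finally show ?thesis .
  qed
  hence "(D/T) *\<^sub>R (T *\<^sub>R u) = (D/T) *\<^sub>R ((T/D) *\<^sub>R (w - a))" by simp
  hence "w - a = D *\<^sub>R u" using T Dh by simp
  hence wa: "w = a + (T+h) *\<^sub>R u" using DT by (metis add.commute diff_add_cancel)
  show thesis
  proof (rule that[OF h(1)])
    show "A \<inter> ball (a + (T+h) *\<^sub>R u) (T+h) = {}"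
      using b DT wa by (auto simp: not_less)
  qed
qed

lemma extend:
  fixes A :: "'a::euclidean_space set" and a u :: 'a
  assumes cl: "closed A" "A \<noteq> {}" and unp: "\<And>c w. c \<in> A \<Longrightarrow> dist c w < R \<Longrightarrow> w \<in> Unp A"
    and a: "a \<in> A" and u: "norm u = 1" and s: "0 < s" "s < R"
    and disj: "A \<inter> ball (a + s *\<^sub>R u) s = {}"
  shows "\<forall>t. 0 \<le> t \<and> t < R \<longrightarrow> A \<inter> ball (a + t *\<^sub>R u) t = {}"
proof (rule ccontr)
  assume "\<not> ?thesis"
  then obtain t0 where t0: "0 \<le> t0" "t0 < R" "A \<inter> ball (a + t0 *\<^sub>R u) t0 \<noteq> {}" by blast
  have bd: "t \<le> t0" if "A \<inter> ball (a + t *\<^sub>R u) t = {}" for t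
  proof (rule ccontr)
    assume "\<not> t \<le> t0"
    hence "ball (a + t0 *\<^sub>R u) t0 \<subseteq> ball (a + t *\<^sub>R u) t" using nest[OF u] by auto
    thus False using that t0(3) by blast
  qed
  define S where "S = {t. s \<le> t \<and> A \<inter> ball (a + t *\<^sub>R u) t = {}}"
  have Sne: "S \<noteq> {}" using disj S_def by auto
  have Sbd: "bdd_above S" unfolding S_def by (rule bdd_aboveI[of _ t0]) (use bd in auto)
  define T where "T = Sup S"
  have sT: "s \<le> T" unfolding T_def using disj S_def Sbd by (auto intro: cSup_upper)
  have Tt0: "T \<le> t0" unfolding T_def using Sne bd S_def by (auto intro: cSup_least)
  have Tdisj: "A \<inter> ball (a + T *\<^sub>R u) T = {}"
  proof (rule ccontr)
    assume "A \<inter> ball (a + T *\<^sub>R u) T \<noteq> {}"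
    then obtain x where x: "x \<in> A" "dist (a + T *\<^sub>R u) x < T" by auto
    define d where "d = dist (a + T *\<^sub>R u) x"
    have d0: "0 \<le> d" using d_def by simp
    define t1 where "t1 = (2*T + d)/3"
    have t1T: "t1 < T" unfolding t1_def using x(2) d_def by simp
    then obtain t where t: "t \<in> S" "t1 < t" using less_cSup_iff[OF Sne Sbd] T_def by blast
    have "dist (a + t1 *\<^sub>R u) (a + T *\<^sub>R u) = T - t1"
      using u t1T by (simp add: dist_norm algebra_simps flip: scaleR_diff_left)
    hence "dist (a + t1 *\<^sub>R u) x \<le> (T - t1) + d" using dist_triangle[of "a + t1 *\<^sub>R u" x "a + T *\<^sub>R u"] d_def by linarith
    moreover have "(T - t1) + d < t1" unfolding t1_def using x(2) d_def by (simp add: field_simps)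
    ultimately have "x \<in> ball (a + t1 *\<^sub>R u) t1" by simp
    hence "x \<in> ball (a + t *\<^sub>R u) t" using nest[OF u, of t1 t a] t by auto
    thus False using t S_def x(1) by auto
  qed
  obtain h where h: "h > 0" "A \<inter> ball (a + (T+h) *\<^sub>R u) (T+h) = {}"
  proof (rule step[OF cl unp a u _ _ Tdisj])
    show "0 < T" using sT s by linarith
    show "T < R" using Tt0 t0 by linarith
  qed auto
  have "T + h \<in> S" using h sT S_def by auto
  hence "T + h \<le> T" unfolding T_def using Sbd by (rule cSup_upper)
  thus False using h by simp
qed

lemma dist_sq:
  fixes a b x :: "'a::euclidean_space"
  assumes "norm x = 1"
  shows "(dist (a + r *\<^sub>R x) b)^2 = (norm (b - a))^2 - 2*r*(x \<bullet> (b - a)) + r^2"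
proof -
  have "x \<bullet> x = 1" using assms by (simp add: dot_square_norm)
  have "a + r *\<^sub>R x - b = r *\<^sub>R x - (b - a)" by (simp add: algebra_simps)
  hence "(dist (a + r *\<^sub>R x) b)^2 = (r *\<^sub>R x - (b - a)) \<bullet> (r *\<^sub>R x - (b - a))"
    by (simp only: dist_norm power2_norm_eq_inner)
  also have "\<dots> = r^2 * (x \<bullet> x) - 2*r*(x \<bullet> (b - a)) + (b - a) \<bullet> (b - a)"
    by (simp add: inner_diff_left inner_diff_right inner_commute algebra_simps power2_eq_square)
  also have "(b - a) \<bullet> (b - a) = (norm (b - a))^2" by (simp add: power2_norm_eq_inner)
  finally show ?thesis using \<open>x \<bullet> x = 1\<close> by simp
qed

lemma ball_char:
  fixes a x :: "'a::euclidean_space"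
  assumes "norm x = 1" "r > 0"
  shows "A \<inter> ball (a + r *\<^sub>R x) r = {} \<longleftrightarrow> (\<forall>b\<in>A. 2*r*(x \<bullet> (b - a)) \<le> (norm (b - a))^2)"
proof -
  have *: "r \<le> dist (a + r *\<^sub>R x) b \<longleftrightarrow> 2*r*(x \<bullet> (b - a)) \<le> (norm (b - a))^2" for b
  proof -
    have "r \<le> dist (a + r *\<^sub>R x) b \<longleftrightarrow> r^2 \<le> (dist (a + r *\<^sub>R x) b)^2"
      using assms(2) by (simp add: abs_le_square_iff[symmetric])
    also have "\<dots> \<longleftrightarrow> 2*r*(x \<bullet> (b - a)) \<le> (norm (b - a))^2" using dist_sq[OF assms(1)] by auto
    finally show ?thesis .
  qed
  show ?thesis
  proof
    assume H: "A \<inter> ball (a + r *\<^sub>R x) r = {}"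
    show "\<forall>b\<in>A. 2*r*(x \<bullet> (b - a)) \<le> (norm (b - a))^2"
    proof
      fix b assume "b \<in> A"
      hence "r \<le> dist (a + r *\<^sub>R x) b" using H by (auto simp: not_less)
      thus "2*r*(x \<bullet> (b - a)) \<le> (norm (b - a))^2" using * by blast
    qed
  next
    assume H: "\<forall>b\<in>A. 2*r*(x \<bullet> (b - a)) \<le> (norm (b - a))^2"
    show "A \<inter> ball (a + r *\<^sub>R x) r = {}"
    proof (rule ccontr)
      assume "A \<inter> ball (a + r *\<^sub>R x) r \<noteq> {}"
      then obtain b where "b \<in> A" "dist (a + r *\<^sub>R x) b < r" by auto
      thus False using H * by (meson not_less)
    qed
  qed
qed

theorem mainTheorem18:
  fixes A :: "'a::euclidean_space set" and R :: real
  assumes "DIM('a) \<ge> 2"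
    and "R > 0"
    and "is_body A"
    and "reach A \<ge> ereal R"
  shows "R_body R A \<and> (\<forall>a\<in>frontier A. sph_convex (normals_R R A a))"
proof
  have cl: "closed A" "A \<noteq> {}" using assms(3) unfolding is_body_def by auto
  have unp: "\<And>c w. c \<in> A \<Longrightarrow> dist c w < R \<Longrightarrow> w \<in> Unp A"
    using Unp_reach[OF assms(4)] by blast
  show "R_body R A" unfolding R_body_def
  proof (intro conjI allI impI assms(3))
    fix y assume y: "y \<notin> A"
    define p where "p = nearest A y"
    have p: "p \<in> A" "\<forall>b\<in>A. dist y p \<le> dist y b" using nearest_ex[OF cl] p_def by auto
    define D where "D = dist y p"
    have D0: "D > 0" using p y D_def by auto
    show "\<exists>c. y \<in> ball c R \<and> A \<inter> ball c R = {}"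
    proof (cases "R \<le> D")
      case True
      have "A \<inter> ball y R = {}" using p True D_def by (auto simp: not_less)
      thus ?thesis using assms(2) by (intro exI[of _ y]) auto
    next
      case False
      define u where "u = (1/D) *\<^sub>R (y - p)"
      have u: "norm u = 1" using D0 by (simp add: u_def D_def dist_norm norm_minus_commute)
      have pDu: "p + D *\<^sub>R u = y" using D0 by (simp add: u_def)
      have "A \<inter> ball (p + D *\<^sub>R u) D = {}" unfolding pDu using p D_def by (auto simp: not_less)
      from extend[OF cl unp p(1) u D0 _ this] False
      have "\<forall>t. 0 \<le> t \<and> t < R \<longrightarrow> A \<inter> ball (p + t *\<^sub>R u) t = {}" by auto
      from union_ball[OF u assms(2) this] have disj: "A \<inter> ball (p + R *\<^sub>R u) R = {}" .
      have "dist (p + R *\<^sub>R u) (p + D *\<^sub>R u) = R - D"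
        using u False by (simp add: dist_norm algebra_simps flip: scaleR_diff_left)
      hence "y \<in> ball (p + R *\<^sub>R u) R" using pDu D0 by auto
      thus ?thesis using disj by blast
    qed
  qed
  show "\<forall>a\<in>frontier A. sph_convex (normals_R R A a)"
  proof
    fix a assume "a \<in> frontier A"
    hence a: "a \<in> A" using frontier_subset_closed[OF cl(1)] by auto
    define N where "N = normals_R R A a"
    define C where "C = {t *\<^sub>R v | t v. t \<ge> 0 \<and> v \<in> N}"
    define P where "P = {y. \<exists>\<tau>\<ge>0. \<forall>b\<in>A. 2*R*(y \<bullet> (b - a)) \<le> \<tau> * (norm (b - a))^2}"
    have NS: "N \<subseteq> sphere 0 1" unfolding N_def normals_R_def by auto
    have convP: "convex P" unfolding convex_def
    proof (intro ballI allI impI)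
      fix x y :: 'a and s t :: real
      assume x: "x \<in> P" and y: "y \<in> P" and st: "0 \<le> s" "0 \<le> t" "s + t = 1"
      obtain \<tau>1 where t1: "\<tau>1 \<ge> 0" "\<forall>b\<in>A. 2*R*(x \<bullet> (b - a)) \<le> \<tau>1 * (norm (b - a))^2" using x P_def by auto
      obtain \<tau>2 where t2: "\<tau>2 \<ge> 0" "\<forall>b\<in>A. 2*R*(y \<bullet> (b - a)) \<le> \<tau>2 * (norm (b - a))^2" using y P_def by auto
      have "\<forall>b\<in>A. 2*R*((s *\<^sub>R x + t *\<^sub>R y) \<bullet> (b - a)) \<le> (s*\<tau>1 + t*\<tau>2) * (norm (b - a))^2"
      proof
        fix b assume "b \<in> A"
        have "s * (2*R*(x \<bullet> (b - a))) \<le> s * (\<tau>1 * (norm (b - a))^2)"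
          using t1 \<open>b \<in> A\<close> st by (intro mult_left_mono) auto
        moreover have "t * (2*R*(y \<bullet> (b - a))) \<le> t * (\<tau>2 * (norm (b - a))^2)"
          using t2 \<open>b \<in> A\<close> st by (intro mult_left_mono) auto
        ultimately show "2*R*((s *\<^sub>R x + t *\<^sub>R y) \<bullet> (b - a)) \<le> (s*\<tau>1 + t*\<tau>2) * (norm (b - a))^2"
          by (simp add: inner_add_left algebra_simps)
      qed
      moreover have "s*\<tau>1 + t*\<tau>2 \<ge> 0" using st t1 t2 by simp
      ultimately show "s *\<^sub>R x + t *\<^sub>R y \<in> P" unfolding P_def by blast
    qed
    have CP: "C \<subseteq> P"
    proof
      fix y assume "y \<in> C"
      then obtain t v where tv: "y = t *\<^sub>R v" "t \<ge> 0" "v \<in> N" using C_def by auto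
      have v1: "norm v = 1" using tv NS by auto
      have "A \<inter> ball (a + R *\<^sub>R v) R = {}" using tv(3) by (simp add: N_def normals_R_def)
      hence vb: "\<forall>b\<in>A. 2*R*(v \<bullet> (b - a)) \<le> (norm (b - a))^2" using ball_char[OF v1 assms(2)] by blast
      have "\<forall>b\<in>A. 2*R*(y \<bullet> (b - a)) \<le> t * (norm (b - a))^2"
      proof
        fix b assume "b \<in> A"
        hence "t * (2*R*(v \<bullet> (b - a))) \<le> t * (norm (b - a))^2" using vb tv by (intro mult_left_mono) auto
        thus "2*R*(y \<bullet> (b - a)) \<le> t * (norm (b - a))^2" using tv by (simp add: algebra_simps)
      qed
      thus "y \<in> P" using tv P_def by blast
    qed
    have hullP: "convex hull C \<subseteq> P" using CP convP by (rule hull_minimal)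
    have "convex hull C \<inter> sphere 0 1 = N"
    proof
      show "N \<subseteq> convex hull C \<inter> sphere 0 1"
      proof
        fix v assume "v \<in> N"
        hence "v \<in> C" unfolding C_def by (intro CollectI exI[of _ 1] exI[of _ v]) auto
        hence "v \<in> convex hull C" by (rule hull_inc)
        moreover have "v \<in> sphere 0 1" using NS \<open>v \<in> N\<close> by blast
        ultimately show "v \<in> convex hull C \<inter> sphere 0 1" by blast
      qed
    next
      show "convex hull C \<inter> sphere 0 1 \<subseteq> N"
      proof
        fix x assume x: "x \<in> convex hull C \<inter> sphere 0 1"
        hence x1: "norm x = 1" by simp
        have "x \<in> P" using x hullP by blast
        then obtain \<tau> where tau: "\<tau> \<ge> 0" "\<forall>b\<in>A. 2*R*(x \<bullet> (b - a)) \<le> \<tau> * (norm (b - a))^2"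
          unfolding P_def by blast
        define \<tau>' where "\<tau>' = max \<tau> 1"
        have tau': "\<tau>' \<ge> 1" "\<tau> \<le> \<tau>'" unfolding \<tau>'_def by auto
        define r where "r = R / \<tau>'"
        have r: "r > 0" "r \<le> R" using tau' assms(2) unfolding r_def by (auto simp: field_simps)
        have "\<forall>b\<in>A. 2*r*(x \<bullet> (b - a)) \<le> (norm (b - a))^2"
        proof
          fix b assume "b \<in> A"
          have "2*R*(x \<bullet> (b - a)) \<le> \<tau>' * (norm (b - a))^2"
            using tau \<open>b \<in> A\<close> tau' by (meson mult_right_mono order_trans zero_le_power2)
          hence "(2*R*(x \<bullet> (b - a))) / \<tau>' \<le> (norm (b - a))^2" using tau' by (simp add: field_simps)
          thus "2*r*(x \<bullet> (b - a)) \<le> (norm (b - a))^2" unfolding r_def by (simp add: field_simps)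
        qed
        hence "A \<inter> ball (a + r *\<^sub>R x) r = {}" using ball_char[OF x1 r(1)] by blast
        moreover have "ball (a + (r/2) *\<^sub>R x) (r/2) \<subseteq> ball (a + r *\<^sub>R x) r" using nest[OF x1] r by auto
        ultimately have "A \<inter> ball (a + (r/2) *\<^sub>R x) (r/2) = {}" by blast
        from extend[OF cl unp a x1 _ _ this] r
        have "\<forall>t. 0 \<le> t \<and> t < R \<longrightarrow> A \<inter> ball (a + t *\<^sub>R x) t = {}" by auto
        from union_ball[OF x1 assms(2) this]
        show "x \<in> N" unfolding N_def normals_R_def using x1 by auto
      qed
    qed
    thus "sph_convex (normals_R R A a)" unfolding sph_convex_def N_def[symmetric] C_def[symmetric] using NS by auto
  qed
qed

end
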